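(* Let $\mathcal{X}_{k|k-1}\subset\mathbb{R}^n$ and $\mathcal{V}_k\subset\mathbb{R}^r$ be constrained zonotopes and $y_k\in\mathbb{R}^m$. Let $h:\mathbb{R}^n\times\mathbb{R}^r\to\mathbb{R}^m$ and write it as $\varrho^{\rm h}:\mathbb{R}^{n+r}\to\mathbb{R}^m$, $\varrho^{\rm h}(z)=h(x,v)$ for $z=[x^\top\ v^\top]^\top$. Let $\mathcal{Z}_k=\mathcal{X}_{k|k-1}\times\mathcal{V}_k$, let $\mathcal{P}_k\supseteq\mathcal{Z}_k$ be a convex polytope, and suppose $\varrho^{\rm h}=\varrho^{\rm ha}-\varrho^{\rm hb}$ on $\mathcal{P}_k$ where $\varrho^{\rm ha},\varrho^{\rm hb}$ are differentiable and componentwise convex on $\mathcal{P}_k$. Let $\bar z\in\mathcal{P}_k$, let $H=\nabla_z\varrho^{\rm h}(\bar z)=[H^{\rm x}\ H^{\rm v}]$ with $H^{\rm x}=\nabla_x\varrho^{\rm h}(\bar z)$, $H^{\rm v}=\nabla_v\varrho^{\rm h}(\bar z)$, and define $\bar\varrho(z)=\varrho^{\rm h}(\bar z)+H(z-\bar z)$, $\bar\varrho^{\rm a}(z)=\varrho^{\rm ha}(\bar z)+\nabla_z\varrho^{\rm ha}(\bar z)(z-\bar z)$, $\bar\varrho^{\rm b}(z)=\varrho^{\rm hb}(\bar z)+\nabla_z\varrho^{\rm hb}(\bar z)(z-\bar z)$. For $i=1,\ldots,m$ let $$e^-_i=\min_{z\in\mathrm{vert}(\mathcal{P}_k)}\big(\bar\varrho^{\rm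 a}_i(z)-\varrho^{\rm hb}_i(z)-\bar\varrho_i(z)\big),\qquad e^+_i=\max_{z\in\mathrm{vert}(\mathcal{P}_k)}\big(\varrho^{\rm ha}_i(z)-\bar\varrho^{\rm b}_i(z)-\bar\varrho_i(z)\big),$$ and let $\mathcal{R}_k$ be the zonotope $\{\mathrm{diag}(\tfrac12(e^+-e^-)),\tfrac12(e^-+e^+)\}$ (the box $[e^-,e^+]$). Define the constrained zonotope $\mathcal{Y}_k=\big(y_k-\varrho^{\rm h}(\bar z)+H\bar z\big)\oplus(-H^{\rm v}\mathcal{V}_k)\oplus(-\mathcal{R}_k)$. Then $$\{x\in\mathcal{X}_{k|k-1}:\ y_k=h(x,v)\ \text{for some } v\in\mathcal{V}_k\}\subseteq\breve{\mathcal{X}}_k:=\mathcal{X}_{k|k-1}\cap_{H^{\rm x}}\mathcal{Y}_k,$$ and $\breve{\mathcal{X}}_k$ is a constrained zonotope.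
   Context: A constrained zonotope (CZ) is a set $\{G,c,A,b\}=\{G\xi+c:\xi\in[-1,1]^{n_g},\ A\xi=b\}$; a zonotope $\{G,c\}$ has no equality constraints. $\oplus$ is Minkowski sum (vectors treated as singletons), $L\mathcal{X}=\{Lx:x\in\mathcal{X}\}$, $-\mathcal{X}=\{-x:x\in\mathcal{X}\}$, $\times$ is Cartesian product. The generalized intersection is $\mathcal{X}\cap_M\mathcal{W}=\{x\in\mathcal{X}:Mx\in\mathcal{W}\}$. $\mathrm{vert}(\mathcal{P})$ is the vertex set of the polytope $\mathcal{P}$. Vector-valued convexity is componentwise; $\nabla_x$ denotes the Jacobian with respect to the block $x$. *)

theory Defs
  imports "HOL-Analysis.Analysis"
begin

definition CZ :: "nat \<Rightarrow> nat \<Rightarrow> (nat \<Rightarrow> 'a::real_vector) \<Rightarrow> 'a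
    \<Rightarrow> (nat \<Rightarrow> nat \<Rightarrow> real) \<Rightarrow> (nat \<Rightarrow> real) \<Rightarrow> 'a set" where
  "CZ ng nc G c A b =
     {(\<Sum>i<ng. \<xi> i *\<^sub>R G i) + c | \<xi>.
        (\<forall>i<ng. \<bar>\<xi> i\<bar> \<le> 1) \<and> (\<forall>j<nc. (\<Sum>i<ng. A j i * \<xi> i) = b j)}"

definition is_CZ :: "'a::real_vector set \<Rightarrow> bool" where
  "is_CZ S \<longleftrightarrow> (\<exists>ng nc G c A b. S = CZ ng nc G c A b)"

definition zono :: "real^'g^'m \<Rightarrow> real^'m \<Rightarrow> (real^'m) set" where
  "zono G c = {G *v \<xi> + c | \<xi>. \<forall>i. \<bar>\<xi> $ i\<bar> \<le> 1}"

definition diagm :: "real^'m \<Rightarrow> real^'m^'m" where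
  "diagm d = (\<chi> i j. if i = j then d $ i else 0)"

definition msum :: "'a::plus set \<Rightarrow> 'a set \<Rightarrow> 'a set" where
  "msum A B = {a + b | a b. a \<in> A \<and> b \<in> B}"

definition gen_inter :: "(real^'n) set \<Rightarrow> real^'n^'m \<Rightarrow> (real^'m) set \<Rightarrow> (real^'n) set" where
  "gen_inter X M W = {x \<in> X. M *v x \<in> W}"

definition stack :: "real^'n \<Rightarrow> real^'r \<Rightarrow> real^('n::finite + 'r::finite)" where
  "stack x v = (\<chi> i. case i of Inl j \<Rightarrow> x $ j | Inr j \<Rightarrow> v $ j)"

definition xpart :: "real^('n::finite + 'r::finite) \<Rightarrow> real^'n" where
  "xpart z = (\<chi> j. z $ Inl j)"

definition vpart :: "real^('n::finite + 'r::finite) \<Rightarrow> real^'r" where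
  "vpart z = (\<chi> j. z $ Inr j)"

definition xcols :: "real^('n::finite + 'r::finite)^'m \<Rightarrow> real^'n^'m" where
  "xcols H = (\<chi> i j. H $ i $ Inl j)"

definition vcols :: "real^('n::finite + 'r::finite)^'m \<Rightarrow> real^'r^'m" where
  "vcols H = (\<chi> i j. H $ i $ Inr j)"

definition vert :: "'a::real_vector set \<Rightarrow> 'a set" where
  "vert P = {z. z extreme_point_of P}"

end

theory Submission
  imports Defs
begin


definition CZC :: "nat \<Rightarrow> (nat \<Rightarrow> 'a::real_vector) \<Rightarrow> 'a \<Rightarrow> ((nat \<Rightarrow> real) \<times> real) set \<Rightarrow> 'a set" where
  "CZC n G c C = {(\<Sum>i<n. \<xi> i *\<^sub>R G i) + c | \<xi>.
     (\<forall>i<n. \<bar>\<xi> i\<bar> \<le> 1) \<and> (\<forall>(a,\<beta>)\<in>C. (\<Sum>i<n. a i * \<xi> i) = \<beta>)}"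

lemma is_CZ_CZC: "is_CZ S \<longleftrightarrow> (\<exists>n G c C. finite C \<and> S = CZC n G c C)"
proof
  assume "is_CZ S"
  then obtain ng nc G c A b where S: "S = CZ ng nc G c A b" unfolding is_CZ_def by blast
  have "S = CZC ng G c ((\<lambda>j. (A j, b j)) ` {..<nc})"
    unfolding S CZ_def CZC_def by auto
  then show "\<exists>n G c C. finite C \<and> S = CZC n G c C" by blast
next
  assume "\<exists>n G c C. finite C \<and> S = CZC n G c C"
  then obtain n G c C where fC: "finite C" and S: "S = CZC n G c C" by blast
  obtain e where e: "bij_betw e {0..<card C} C" using ex_bij_betw_nat_finite[OF fC] by blast
  have eq: "(\<forall>(a,\<beta>)\<in>C. P a \<beta>) \<longleftrightarrow> (\<forall>j<card C. P (fst (e j)) (snd (e j)))" for P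
  proof
    assume "\<forall>(a,\<beta>)\<in>C. P a \<beta>"
    then show "\<forall>j<card C. P (fst (e j)) (snd (e j))"
    proof (intro allI impI)
      fix j assume "j < card C"
      then have "e j \<in> C" using e bij_betwE by fastforce
      then show "P (fst (e j)) (snd (e j))" using \<open>\<forall>(a,\<beta>)\<in>C. P a \<beta>\<close> by (cases "e j") auto
    qed
  next
    assume H: "\<forall>j<card C. P (fst (e j)) (snd (e j))"
    show "\<forall>(a,\<beta>)\<in>C. P a \<beta>"
    proof (clarify)
      fix a \<beta> assume "(a,\<beta>) \<in> C"
      then obtain j where "j < card C" "e j = (a,\<beta>)" using e
        by (metis atLeastLessThan_iff bij_betw_iff_bijections zero_le)
      then show "P a \<beta>" using H by (metis fst_conv snd_conv)
    qed
  qed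
  have "S = CZ n (card C) G c (\<lambda>j. fst (e j)) (\<lambda>j. snd (e j))"
    unfolding S CZ_def CZC_def eq by simp
  then show "is_CZ S" unfolding is_CZ_def by blast
qed

lemma CZC_singleton: "{c} = CZC 0 G c {}"
  unfolding CZC_def by auto

lemma is_CZ_singleton: "is_CZ {c}"
  unfolding is_CZ_CZC using CZC_singleton by blast

lemma CZC_linear_image:
  assumes "linear f"
  shows "f ` CZC n G c C = CZC n (f \<circ> G) (f c) C"
proof -
  have "f ((\<Sum>i<n. \<xi> i *\<^sub>R G i) + c) = (\<Sum>i<n. \<xi> i *\<^sub>R (f \<circ> G) i) + f c" for \<xi>
    using assms by (simp add: linear_add linear_sum linear_scale)
  moreover have "f ` CZC n G c C = {f ((\<Sum>i<n. \<xi> i *\<^sub>R G i) + c) | \<xi>.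
     (\<forall>i<n. \<bar>\<xi> i\<bar> \<le> 1) \<and> (\<forall>(a,\<beta>)\<in>C. (\<Sum>i<n. a i * \<xi> i) = \<beta>)}"
    unfolding CZC_def by blast
  ultimately show ?thesis unfolding CZC_def by simp
qed

lemma is_CZ_linear_image: "linear f \<Longrightarrow> is_CZ S \<Longrightarrow> is_CZ (f ` S)"
  unfolding is_CZ_CZC using CZC_linear_image by metis

lemma sum_split_nat: "(\<Sum>i<(n1::nat)+n2. f i) = (\<Sum>i<n1. f i) + (\<Sum>i<n2. f (n1+i))"
  by (induction n2) (auto simp: add.assoc)

definition cat :: "nat \<Rightarrow> (nat \<Rightarrow> 'b) \<Rightarrow> (nat \<Rightarrow> 'b) \<Rightarrow> nat \<Rightarrow> 'b" where
  "cat n1 f g = (\<lambda>i. if i < n1 then f i else g (i - n1))"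

lemma sum_cat: "(\<Sum>i<(n1::nat)+n2. h (cat n1 f g i) (cat n1 f' g' i)) = (\<Sum>i<n1. h (f i) (f' i)) + (\<Sum>i<n2. h (g i) (g' i))"
  unfolding sum_split_nat cat_def by simp

lemma cat_split: "cat n1 \<xi> (\<lambda>i. \<xi> (n1 + i)) = \<xi>"
  unfolding cat_def by auto

definition shiftC :: "nat \<Rightarrow> ((nat \<Rightarrow> real) \<times> real) set \<Rightarrow> ((nat \<Rightarrow> real) \<times> real) set \<Rightarrow> ((nat \<Rightarrow> real) \<times> real) set" where
  "shiftC n1 C1 C2 = (\<lambda>(a,\<beta>). (cat n1 a (\<lambda>_. 0), \<beta>)) ` C1 \<union> (\<lambda>(a,\<beta>). (cat n1 (\<lambda>_. 0) a, \<beta>)) ` C2"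

lemma shiftC_finite: "finite C1 \<Longrightarrow> finite C2 \<Longrightarrow> finite (shiftC n1 C1 C2)"
  unfolding shiftC_def by auto

lemma shiftC_iff:
  "(\<forall>(a,\<beta>)\<in>shiftC n1 C1 C2. (\<Sum>i<n1+n2. a i * cat n1 \<xi>1 \<xi>2 i) = \<beta>) \<longleftrightarrow>
   (\<forall>(a,\<beta>)\<in>C1. (\<Sum>i<n1. a i * \<xi>1 i) = \<beta>) \<and> (\<forall>(a,\<beta>)\<in>C2. (\<Sum>i<n2. a i * \<xi>2 i) = \<beta>)"
proof -
  have 1: "(\<Sum>i<n1+n2. cat n1 a (\<lambda>_. 0) i * cat n1 \<xi>1 \<xi>2 i) = (\<Sum>i<n1. a i * \<xi>1 i)" for a
    unfolding sum_split_nat cat_def by simp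
  have 2: "(\<Sum>i<n1+n2. cat n1 (\<lambda>_. 0) a i * cat n1 \<xi>1 \<xi>2 i) = (\<Sum>i<n2. a i * \<xi>2 i)" for a
    unfolding sum_split_nat cat_def by simp
  show ?thesis unfolding shiftC_def ball_Un
    apply (intro iffI conjI)
    subgoal by (auto simp: 1 2 dest!: ball_imageD)
    subgoal by (auto simp: 1 2 dest!: ball_imageD)
    subgoal by (auto simp: 1 2)
    subgoal by (auto simp: 1 2)
    done
qed

lemma box_cat: "(\<forall>i<n1+n2. \<bar>cat n1 \<xi>1 \<xi>2 i\<bar> \<le> (1::real)) \<longleftrightarrow> (\<forall>i<n1. \<bar>\<xi>1 i\<bar> \<le> 1) \<and> (\<forall>i<n2. \<bar>\<xi>2 i\<bar> \<le> 1)"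
  unfolding cat_def
proof (auto)
  fix i assume H: "\<forall>i. (i < n1 \<longrightarrow> \<bar>\<xi>1 i\<bar> \<le> 1) \<and> (\<not> i < n1 \<longrightarrow> i < n1 + n2 \<longrightarrow> \<bar>\<xi>2 (i - n1)\<bar> \<le> 1)"
    and "i < n2"
  then show "\<bar>\<xi>2 i\<bar> \<le> 1" using H[rule_format, of "n1 + i"] by simp
qed



lemma CZC_msum:
  "msum (CZC n1 G1 c1 C1) (CZC n2 G2 c2 C2) = CZC (n1+n2) (cat n1 G1 G2) (c1+c2) (shiftC n1 C1 C2)"
proof -
  have S: "(\<Sum>i<n1+n2. cat n1 \<xi>1 \<xi>2 i *\<^sub>R cat n1 G1 G2 i) = (\<Sum>i<n1. \<xi>1 i *\<^sub>R G1 i) + (\<Sum>i<n2. \<xi>2 i *\<^sub>R G2 i)" for \<xi>1 \<xi>2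
    by (rule sum_cat)
  show ?thesis
  proof (rule set_eqI, rule iffI)
    fix x assume "x \<in> msum (CZC n1 G1 c1 C1) (CZC n2 G2 c2 C2)"
    then obtain \<xi>1 \<xi>2 where x: "x = ((\<Sum>i<n1. \<xi>1 i *\<^sub>R G1 i) + c1) + ((\<Sum>i<n2. \<xi>2 i *\<^sub>R G2 i) + c2)"
      and b1: "\<forall>i<n1. \<bar>\<xi>1 i\<bar> \<le> 1" and k1: "\<forall>(a,\<beta>)\<in>C1. (\<Sum>i<n1. a i * \<xi>1 i) = \<beta>"
      and b2: "\<forall>i<n2. \<bar>\<xi>2 i\<bar> \<le> 1" and k2: "\<forall>(a,\<beta>)\<in>C2. (\<Sum>i<n2. a i * \<xi>2 i) = \<beta>"
      unfolding msum_def CZC_def by blast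
    show "x \<in> CZC (n1+n2) (cat n1 G1 G2) (c1+c2) (shiftC n1 C1 C2)"
      unfolding CZC_def
      apply (rule CollectI, rule exI[of _ "cat n1 \<xi>1 \<xi>2"])
      using b1 b2 k1 k2 by (simp add: S x box_cat shiftC_iff add_ac)
  next
    fix x assume "x \<in> CZC (n1+n2) (cat n1 G1 G2) (c1+c2) (shiftC n1 C1 C2)"
    then obtain \<xi> where x: "x = (\<Sum>i<n1+n2. \<xi> i *\<^sub>R cat n1 G1 G2 i) + (c1 + c2)"
      and b: "\<forall>i<n1+n2. \<bar>\<xi> i\<bar> \<le> 1" and k: "\<forall>(a,\<beta>)\<in>shiftC n1 C1 C2. (\<Sum>i<n1+n2. a i * \<xi> i) = \<beta>"
      unfolding CZC_def by blast
    define \<xi>2 where "\<xi>2 = (\<lambda>i. \<xi> (n1 + i))"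
    have e: "cat n1 \<xi> \<xi>2 = \<xi>" unfolding \<xi>2_def cat_def by auto
    have x2: "x = ((\<Sum>i<n1. \<xi> i *\<^sub>R G1 i) + c1) + ((\<Sum>i<n2. \<xi>2 i *\<^sub>R G2 i) + c2)"
      using x S[of \<xi> \<xi>2, unfolded e] by (simp add: add_ac)
    have "(\<forall>i<n1. \<bar>\<xi> i\<bar> \<le> 1) \<and> (\<forall>i<n2. \<bar>\<xi>2 i\<bar> \<le> 1)" proof -
      have "\<forall>i<n1+n2. \<bar>cat n1 \<xi> \<xi>2 i\<bar> \<le> 1" using b by (simp only: e)
      then show ?thesis by (simp only: box_cat)
    qed
    moreover have "(\<forall>(a,\<beta>)\<in>C1. (\<Sum>i<n1. a i * \<xi> i) = \<beta>) \<and> (\<forall>(a,\<beta>)\<in>C2. (\<Sum>i<n2. a i * \<xi>2 i) = \<beta>)"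
      proof -
      have "\<forall>(a,\<beta>)\<in>shiftC n1 C1 C2. (\<Sum>i<n1+n2. a i * cat n1 \<xi> \<xi>2 i) = \<beta>" using k by (simp only: e)
      then show ?thesis by (simp only: shiftC_iff)
    qed
    ultimately show "x \<in> msum (CZC n1 G1 c1 C1) (CZC n2 G2 c2 C2)"
      unfolding msum_def CZC_def using x2 by blast
  qed
qed

lemma is_CZ_msum: "is_CZ A \<Longrightarrow> is_CZ B \<Longrightarrow> is_CZ (msum A B)"
  unfolding is_CZ_CZC using CZC_msum shiftC_finite by metis

lemma eqk:
  fixes M :: "real^'n^'m"
  shows "(M *v ((\<Sum>i<n1. \<xi>1 i *\<^sub>R G1 i) + c1) = (\<Sum>i<n2. \<xi>2 i *\<^sub>R G2 i) + c2) \<longleftrightarrow>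
    (\<forall>k. (\<Sum>i<n1+n2. cat n1 (\<lambda>i. (M *v G1 i)$k) (\<lambda>i. -(G2 i $ k)) i * cat n1 \<xi>1 \<xi>2 i) = (c2 - M *v c1)$k)"
proof -
  have "M *v ((\<Sum>i<n1. \<xi>1 i *\<^sub>R G1 i) + c1) = (\<Sum>i<n1. \<xi>1 i *\<^sub>R (M *v G1 i)) + M *v c1"
    using matrix_vector_mul_linear[of M] by (simp add: linear_add linear_sum linear_scale)
  then show ?thesis
    unfolding sum_split_nat cat_def
    by (auto simp: vec_eq_iff sum_negf algebra_simps)
qed

lemma CZC_gen_inter:
  fixes M :: "real^'n^'m"
  shows "gen_inter (CZC n1 G1 c1 C1) M (CZC n2 G2 c2 C2) =
    CZC (n1+n2) (cat n1 G1 (\<lambda>_. 0)) c1 (shiftC n1 C1 C2 \<union>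
      range (\<lambda>k. (cat n1 (\<lambda>i. (M *v G1 i)$k) (\<lambda>i. -(G2 i $ k)), (c2 - M *v c1)$k)))"
proof -
  have S: "(\<Sum>i<n1+n2. cat n1 \<xi>1 \<xi>2 i *\<^sub>R cat n1 G1 (\<lambda>_. 0) i) = (\<Sum>i<n1. \<xi>1 i *\<^sub>R G1 i)" for \<xi>1 \<xi>2
    unfolding sum_split_nat cat_def by simp
  show ?thesis
  proof (rule set_eqI, rule iffI)
    fix x assume "x \<in> gen_inter (CZC n1 G1 c1 C1) M (CZC n2 G2 c2 C2)"
    then obtain \<xi>1 \<xi>2 where x: "x = (\<Sum>i<n1. \<xi>1 i *\<^sub>R G1 i) + c1"
      and b1: "\<forall>i<n1. \<bar>\<xi>1 i\<bar> \<le> 1" and k1: "\<forall>(a,\<beta>)\<in>C1. (\<Sum>i<n1. a i * \<xi>1 i) = \<beta>"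
      and b2: "\<forall>i<n2. \<bar>\<xi>2 i\<bar> \<le> 1" and k2: "\<forall>(a,\<beta>)\<in>C2. (\<Sum>i<n2. a i * \<xi>2 i) = \<beta>"
      and m: "M *v ((\<Sum>i<n1. \<xi>1 i *\<^sub>R G1 i) + c1) = (\<Sum>i<n2. \<xi>2 i *\<^sub>R G2 i) + c2"
      unfolding gen_inter_def CZC_def by blast
    show "x \<in> CZC (n1+n2) (cat n1 G1 (\<lambda>_. 0)) c1 (shiftC n1 C1 C2 \<union>
      range (\<lambda>k. (cat n1 (\<lambda>i. (M *v G1 i)$k) (\<lambda>i. -(G2 i $ k)), (c2 - M *v c1)$k)))"
      unfolding CZC_def
    proof (intro CollectI exI[where x="cat n1 \<xi>1 \<xi>2"] conjI)
      show "x = (\<Sum>i<n1+n2. cat n1 \<xi>1 \<xi>2 i *\<^sub>R cat n1 G1 (\<lambda>_. 0) i) + c1" using x S by simp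
      show "\<forall>i<n1+n2. \<bar>cat n1 \<xi>1 \<xi>2 i\<bar> \<le> 1" unfolding box_cat using b1 b2 by blast
      have "\<forall>(a,\<beta>)\<in>shiftC n1 C1 C2. (\<Sum>i<n1+n2. a i * cat n1 \<xi>1 \<xi>2 i) = \<beta>"
        unfolding shiftC_iff using k1 k2 by blast
      moreover have "\<forall>k. (\<Sum>i<n1+n2. cat n1 (\<lambda>i. (M *v G1 i)$k) (\<lambda>i. -(G2 i $ k)) i * cat n1 \<xi>1 \<xi>2 i) = (c2 - M *v c1)$k"
        using m unfolding eqk .
      ultimately show "\<forall>(a,\<beta>)\<in>shiftC n1 C1 C2 \<union>
      range (\<lambda>k. (cat n1 (\<lambda>i. (M *v G1 i)$k) (\<lambda>i. -(G2 i $ k)), (c2 - M *v c1)$k)).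
        (\<Sum>i<n1+n2. a i * cat n1 \<xi>1 \<xi>2 i) = \<beta>"
        by auto
    qed
  next
    fix x assume "x \<in> CZC (n1+n2) (cat n1 G1 (\<lambda>_. 0)) c1 (shiftC n1 C1 C2 \<union>
      range (\<lambda>k. (cat n1 (\<lambda>i. (M *v G1 i)$k) (\<lambda>i. -(G2 i $ k)), (c2 - M *v c1)$k)))"
    then obtain \<xi> where x: "x = (\<Sum>i<n1+n2. \<xi> i *\<^sub>R cat n1 G1 (\<lambda>_. 0) i) + c1"
      and b: "\<forall>i<n1+n2. \<bar>\<xi> i\<bar> \<le> 1" and k: "\<forall>(a,\<beta>)\<in>shiftC n1 C1 C2. (\<Sum>i<n1+n2. a i * \<xi> i) = \<beta>"
      and kk: "\<forall>k. (\<Sum>i<n1+n2. cat n1 (\<lambda>i. (M *v G1 i)$k) (\<lambda>i. -(G2 i $ k)) i * \<xi> i) = (c2 - M *v c1)$k"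
      unfolding CZC_def ball_Un by auto
    define \<xi>2 where "\<xi>2 = (\<lambda>i. \<xi> (n1 + i))"
    have e: "cat n1 \<xi> \<xi>2 = \<xi>" unfolding \<xi>2_def cat_def by auto
    have x2: "x = (\<Sum>i<n1. \<xi> i *\<^sub>R G1 i) + c1"
      using x S[of \<xi> \<xi>2, unfolded e] by simp
    have "(\<forall>i<n1. \<bar>\<xi> i\<bar> \<le> 1) \<and> (\<forall>i<n2. \<bar>\<xi>2 i\<bar> \<le> 1)" proof -
      have "\<forall>i<n1+n2. \<bar>cat n1 \<xi> \<xi>2 i\<bar> \<le> 1" using b by (simp only: e)
      then show ?thesis by (simp only: box_cat)
    qed
    moreover have "(\<forall>(a,\<beta>)\<in>C1. (\<Sum>i<n1. a i * \<xi> i) = \<beta>) \<and> (\<forall>(a,\<beta>)\<in>C2. (\<Sum>i<n2. a i * \<xi>2 i) = \<beta>)"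
      proof -
      have "\<forall>(a,\<beta>)\<in>shiftC n1 C1 C2. (\<Sum>i<n1+n2. a i * cat n1 \<xi> \<xi>2 i) = \<beta>" using k by (simp only: e)
      then show ?thesis by (simp only: shiftC_iff)
    qed
    moreover have "M *v ((\<Sum>i<n1. \<xi> i *\<^sub>R G1 i) + c1) = (\<Sum>i<n2. \<xi>2 i *\<^sub>R G2 i) + c2"
      unfolding eqk e using kk by blast
    ultimately show "x \<in> gen_inter (CZC n1 G1 c1 C1) M (CZC n2 G2 c2 C2)"
      unfolding gen_inter_def CZC_def using x2 by blast
  qed
qed

lemma is_CZ_gen_inter: "is_CZ X \<Longrightarrow> is_CZ W \<Longrightarrow> is_CZ (gen_inter X M W)"
proof -
  assume "is_CZ X" "is_CZ W"
  then obtain n1 G1 c1 C1 n2 G2 c2 C2 where f: "finite C1" "finite C2"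
    and X: "X = CZC n1 G1 c1 C1" and W: "W = CZC n2 G2 c2 C2" unfolding is_CZ_CZC by blast
  let ?C = "shiftC n1 C1 C2 \<union>
      range (\<lambda>k. (cat n1 (\<lambda>i. (M *v G1 i)$k) (\<lambda>i. -(G2 i $ k)), (c2 - M *v c1)$k))"
  have "finite ?C" using f shiftC_finite by simp
  moreover have "gen_inter X M W = CZC (n1+n2) (cat n1 G1 (\<lambda>_. 0)) c1 ?C"
    unfolding X W by (rule CZC_gen_inter)
  ultimately show ?thesis unfolding is_CZ_CZC by blast
qed

lemma is_CZ_zono:
  fixes D :: "real^'g^'m"
  shows "is_CZ (zono D c)"
proof -
  obtain e :: "nat \<Rightarrow> 'g" where e: "bij_betw e {..<CARD('g)} UNIV"
    using ex_bij_betw_nat_finite[of "UNIV :: 'g set"] by (auto simp: atLeast0LessThan)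
  have Dv: "D *v \<xi> = (\<Sum>k<CARD('g). (\<xi> $ e k) *\<^sub>R column (e k) D)" for \<xi>
    unfolding matrix_mult_sum scalar_mult_eq_scaleR
    using sum.reindex_bij_betw[OF e, of "\<lambda>g. (\<xi> $ g) *\<^sub>R column g D"] by simp
  have "zono D c = CZC CARD('g) (\<lambda>k. column (e k) D) c {}"
  proof (rule set_eqI, rule iffI)
    fix x assume "x \<in> zono D c"
    then obtain \<xi> where x: "x = D *v \<xi> + c" and b: "\<forall>i. \<bar>\<xi> $ i\<bar> \<le> 1" unfolding zono_def by blast
    show "x \<in> CZC CARD('g) (\<lambda>k. column (e k) D) c {}"
      unfolding CZC_def
    proof (intro CollectI exI[where x="\<lambda>k. \<xi> $ e k"] conjI)
      show "x = (\<Sum>k<CARD('g). \<xi> $ e k *\<^sub>R column (e k) D) + c" using x Dv by simp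
      show "\<forall>i<CARD('g). \<bar>\<xi> $ e i\<bar> \<le> 1" using b by blast
    qed simp
  next
    fix x assume "x \<in> CZC CARD('g) (\<lambda>k. column (e k) D) c {}"
    then obtain \<eta> where x: "x = (\<Sum>k<CARD('g). \<eta> k *\<^sub>R column (e k) D) + c" and b: "\<forall>k<CARD('g). \<bar>\<eta> k\<bar> \<le> 1"
      unfolding CZC_def by auto
    define \<xi> where "\<xi> = (\<chi> g. \<eta> (inv_into {..<CARD('g)} e g))"
    have xe: "\<xi> $ e k = \<eta> k" if "k < CARD('g)" for k
      unfolding \<xi>_def using e that by (simp add: bij_betw_inv_into_left)
    have "D *v \<xi> = (\<Sum>k<CARD('g). \<eta> k *\<^sub>R column (e k) D)" unfolding Dv
      by (rule sum.cong) (auto simp: xe)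
    moreover have "\<forall>i. \<bar>\<xi> $ i\<bar> \<le> 1"
    proof
      fix i :: 'g
      obtain k where "k < CARD('g)" "e k = i" proof -
        have "i \<in> e ` {..<CARD('g)}" using bij_betw_imp_surj_on[OF e] by simp
        then show ?thesis using that by blast
      qed
      then show "\<bar>\<xi> $ i\<bar> \<le> 1" using xe b by metis
    qed
    ultimately have "x = D *v \<xi> + c \<and> (\<forall>i. \<bar>\<xi> $ i\<bar> \<le> 1)" using x by simp
    then show "x \<in> zono D c" unfolding zono_def by blast
  qed
  then show ?thesis unfolding is_CZ_CZC by blast
qed



lemma tangent_le:
  fixes g :: "'a::real_normed_vector \<Rightarrow> real"
  assumes cv: "convex_on S g" and x0: "x0 \<in> S" and z: "z \<in> S"
    and d: "(g has_derivative g') (at x0)"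
  shows "g x0 + g' (z - x0) \<le> g z"
proof -
  define dd where "dd = z - x0"
  define \<phi> where "\<phi> t = g (x0 + t *\<^sub>R dd)" for t::real
  have lin: "linear g'" using d by (rule has_derivative_linear)
  have f1: "((\<lambda>t. x0 + t *\<^sub>R dd) has_derivative (\<lambda>t. t *\<^sub>R dd)) (at 0)"
    by (auto intro!: derivative_eq_intros)
  have d0: "(g has_derivative g') (at ((\<lambda>t::real. x0 + t *\<^sub>R dd) 0))" using d by simp
  have "((g \<circ> (\<lambda>t. x0 + t *\<^sub>R dd)) has_derivative (g' \<circ> (\<lambda>t. t *\<^sub>R dd))) (at 0)"
    by (rule diff_chain_at[OF f1 d0])
  moreover have "g' \<circ> (\<lambda>t. t *\<^sub>R dd) = (*) (g' dd)"
    using lin by (auto simp: fun_eq_iff linear_scale)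
  moreover have "g \<circ> (\<lambda>t. x0 + t *\<^sub>R dd) = \<phi>" by (auto simp: \<phi>_def fun_eq_iff)
  ultimately have "(\<phi> has_field_derivative g' dd) (at 0)"
    unfolding has_field_derivative_def by simp
  then have "(\<phi> has_field_derivative g' dd) (at 0 within {0<..})"
    by (rule has_field_derivative_at_within)
  then have lim: "((\<lambda>t. (\<phi> t - \<phi> 0) / (t - 0)) \<longlongrightarrow> g' dd) (at_right 0)"
    unfolding has_field_derivative_iff .
  have ev: "eventually (\<lambda>t. (\<phi> t - \<phi> 0) / (t - 0) \<le> g z - g x0) (at_right (0::real))"
  proof -
  have "eventually (\<lambda>x. x \<in> {0<..<1}) (at_right (0::real))" by (rule eventually_at_right_real) simp
  then show ?thesis
  proof (rule eventually_mono)
    fix t :: real assume "t \<in> {0<..<1}"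
    then have t: "0 < t" "t < 1" by auto
    have "x0 + t *\<^sub>R dd = (1 - t) *\<^sub>R x0 + t *\<^sub>R z"
      by (simp add: dd_def algebra_simps)
    then have "\<phi> t \<le> (1 - t) * g x0 + t * g z"
      unfolding \<phi>_def using convex_onD[OF cv, of t x0 z] t x0 z by simp
    then have "\<phi> t - \<phi> 0 \<le> t * (g z - g x0)" by (simp add: \<phi>_def algebra_simps)
    then show "(\<phi> t - \<phi> 0) / (t - 0) \<le> g z - g x0"
      using t by (simp add: divide_simps mult.commute)
  qed
  qed
  have "g' dd \<le> g z - g x0"
    by (rule tendsto_upperbound[OF lim ev]) simp
  then show ?thesis unfolding dd_def by simp
qed

lemma vert_facts:
  fixes P :: "'a::euclidean_space set"
  assumes "polytope P"
  shows "finite (vert P)" "P = convex hull (vert P)"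
proof -
  obtain v where "finite v" "P = convex hull v" using assms unfolding polytope_def by blast
  then have "vert P \<subseteq> v" unfolding vert_def using extreme_points_of_convex_hull by blast
  then show "finite (vert P)" using \<open>finite v\<close> finite_subset by blast
  show "P = convex hull (vert P)" unfolding vert_def
    by (rule Krein_Milman_Minkowski[OF polytope_imp_compact[OF assms] polytope_imp_convex[OF assms]])
qed

lemma max_vert:
  fixes P :: "'a::euclidean_space set"
  assumes P: "polytope P" and cv: "convex_on P f" and z: "z \<in> P"
  shows "f z \<le> Max (f ` vert P)"
proof -
  have fin: "finite (vert P)" and hull: "P = convex hull (vert P)" using vert_facts[OF P] by auto
  have "\<forall>x\<in>vert P. f x \<le> Max (f ` vert P)" using fin by auto
  then have "\<forall>x\<in>convex hull (vert P). f x \<le> Max (f ` vert P)"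
    using convex_on_convex_hull_bound[of "vert P" f] cv hull by simp
  then show ?thesis using z hull by blast
qed

lemma min_vert:
  fixes P :: "'a::euclidean_space set"
  assumes P: "polytope P" and cv: "concave_on P f" and z: "z \<in> P"
  shows "Min (f ` vert P) \<le> f z"
proof -
  have fin: "finite (vert P)" and hull: "P = convex hull (vert P)" using vert_facts[OF P] by auto
  have "\<forall>x\<in>vert P. - f x \<le> - Min (f ` vert P)" using fin by auto
  moreover have "convex_on (convex hull (vert P)) (\<lambda>x. - f x)" using cv hull by (simp add: concave_on_def)
  ultimately have "\<forall>x\<in>convex hull (vert P). - f x \<le> - Min (f ` vert P)"
    using convex_on_convex_hull_bound[of "vert P" "\<lambda>x. - f x"] by blast
  then show ?thesis using z hull by force
qed

lemma affine_conv:
  assumes "linear L" "convex P"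
  shows "convex_on P (\<lambda>z. c + L z)" "concave_on P (\<lambda>z. c + L z)"
proof -
  have e: "c + L (u *\<^sub>R x + v *\<^sub>R y) = u * (c + L x) + v * (c + L y)" if "u + v = 1" for u v x y
  proof -
    have 1: "L (u *\<^sub>R x + v *\<^sub>R y) = u * L x + v * L y"
      using assms(1) by (simp add: linear_add linear_scale)
    have 2: "u * (c + L x) + v * (c + L y) = (u+v)*c + (u * L x + v * L y)" by (simp add: algebra_simps)
    show ?thesis unfolding 1 2 that by simp
  qed
  show "convex_on P (\<lambda>z. c + L z)" unfolding convex_on_def using assms(2) e by simp
  show "concave_on P (\<lambda>z. c + L z)" unfolding concave_on_iff using assms(2) e by simp
qed

lemma box_in_zono:
  fixes em ep r :: "real^'m"
  assumes "\<forall>i. em$i \<le> r$i \<and> r$i \<le> ep$i"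
  shows "r \<in> zono (diagm ((1/2) *\<^sub>R (ep - em))) ((1/2) *\<^sub>R (em + ep))"
proof -
  define d where "d = (1/2) *\<^sub>R (ep - em)"
  define c where "c = (1/2) *\<^sub>R (em + ep)"
  define \<xi> where "\<xi> = (\<chi> i. if d$i = 0 then 0 else (r$i - c$i) / d$i)"
  have "diagm d *v \<xi> + c = r"
    unfolding vec_eq_iff
  proof
    fix i
    have "(diagm d *v \<xi>) $ i = d$i * \<xi>$i"
      unfolding diagm_def matrix_vector_mult_def
      by (simp add: if_distrib if_distribR sum.delta cong: if_cong)
    moreover have "d$i * \<xi>$i + c$i = r$i"
      using assms[rule_format, of i] unfolding \<xi>_def d_def c_def by (auto simp: field_simps)
    ultimately show "(diagm d *v \<xi> + c) $ i = r $ i" by simp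
  qed
  moreover have "\<forall>i. \<bar>\<xi> $ i\<bar> \<le> 1"
  proof
    fix i
    show "\<bar>\<xi> $ i\<bar> \<le> 1"
    proof (cases "d$i = 0")
      case False
      then have "d$i > 0" using assms[rule_format, of i] unfolding d_def by auto
      moreover have "\<bar>r$i - c$i\<bar> \<le> d$i"
        using assms[rule_format, of i] unfolding d_def c_def abs_le_iff by (simp add: field_simps)
      ultimately show ?thesis using False unfolding \<xi>_def by (simp add: abs_div divide_le_eq_1)
    qed (simp add: \<xi>_def)
  qed
  ultimately show ?thesis unfolding zono_def d_def c_def by blast
qed

lemma H_split: "H *v z = xcols H *v xpart z + vcols H *v vpart z"
  unfolding matrix_vector_mult_def xcols_def vcols_def xpart_def vpart_def
  by (simp add: vec_eq_iff sum.Plus[where A=UNIV and B=UNIV, simplified] comp_def)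

lemma xpart_stack[simp]: "xpart (stack x v) = x" and vpart_stack[simp]: "vpart (stack x v) = v"
  unfolding xpart_def vpart_def stack_def by (simp_all add: vec_eq_iff)

lemma lin_uminus: "linear (uminus :: 'a::real_vector \<Rightarrow> 'a)"
  by (auto simp: linear_iff)

lemma lin_neg: "linear (\<lambda>v. - ((Hv::real^'a^'b) *v v))"
proof -
  have "(\<lambda>v. - (Hv *v v)) = uminus \<circ> ((*v) Hv)" by (auto simp: fun_eq_iff)
  then show ?thesis using linear_compose[OF matrix_vector_mul_linear lin_uminus] by simp
qed



theorem theorem2:
  fixes X :: "(real^'n) set" and V :: "(real^'r) set" and y :: "real^'m"
    and h :: "real^'n \<Rightarrow> real^'r \<Rightarrow> real^'m"
    and \<rho>a \<rho>b :: "real^('n + 'r) \<Rightarrow> real^'m"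
    and P :: "(real^('n + 'r)) set" and zbar :: "real^('n + 'r)"
  assumes X_CZ: "is_CZ X" and V_CZ: "is_CZ V"
    and P_poly: "polytope P"
    and Z_sub: "{stack x v | x v. x \<in> X \<and> v \<in> V} \<subseteq> P"
    and dc: "\<forall>z\<in>P. h (xpart z) (vpart z) = \<rho>a z - \<rho>b z"
    and a_diff: "\<forall>z\<in>P. \<rho>a differentiable (at z)"
    and b_diff: "\<forall>z\<in>P. \<rho>b differentiable (at z)"
    and a_conv: "\<forall>i. convex_on P (\<lambda>z. \<rho>a z $ i)"
    and b_conv: "\<forall>i. convex_on P (\<lambda>z. \<rho>b z $ i)"
    and zbar_in: "zbar \<in> P"
  shows
    "let \<rho>h = (\<lambda>z. h (xpart z) (vpart z));
         H = matrix (frechet_derivative \<rho>h (at zbar));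
         Hx = xcols H; Hv = vcols H;
         \<rho>bar = (\<lambda>z. \<rho>h zbar + H *v (z - zbar));
         \<rho>bara = (\<lambda>z. \<rho>a zbar + frechet_derivative \<rho>a (at zbar) (z - zbar));
         \<rho>barb = (\<lambda>z. \<rho>b zbar + frechet_derivative \<rho>b (at zbar) (z - zbar));
         em = (\<chi> i. Min ((\<lambda>z. \<rho>bara z $ i - \<rho>b z $ i - \<rho>bar z $ i) ` vert P));
         ep = (\<chi> i. Max ((\<lambda>z. \<rho>a z $ i - \<rho>barb z $ i - \<rho>bar z $ i) ` vert P));
         R = zono (diagm ((1/2) *\<^sub>R (ep - em))) ((1/2) *\<^sub>R (em + ep));
         Y = msum (msum {y - \<rho>h zbar + H *v zbar} ((\<lambda>v. - (Hv *v v)) ` V)) (uminus ` R);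
         Xb = gen_inter X Hx Y
     in {x \<in> X. \<exists>v\<in>V. y = h x v} \<subseteq> Xb \<and> is_CZ Xb"
proof -
  define \<rho>h where "\<rho>h = (\<lambda>z. h (xpart z) (vpart z))"
  define H where "H = matrix (frechet_derivative \<rho>h (at zbar))"
  define Hx where "Hx = xcols H"
  define Hv where "Hv = vcols H"
  define Da where "Da = frechet_derivative \<rho>a (at zbar)"
  define Db where "Db = frechet_derivative \<rho>b (at zbar)"
  define \<rho>bar where "\<rho>bar = (\<lambda>z. \<rho>h zbar + H *v (z - zbar))"
  define \<rho>bara where "\<rho>bara = (\<lambda>z. \<rho>a zbar + Da (z - zbar))"
  define \<rho>barb where "\<rho>barb = (\<lambda>z. \<rho>b zbar + Db (z - zbar))"
  define em where "em = (\<chi> i. Min ((\<lambda>z. \<rho>bara z $ i - \<rho>b z $ i - \<rho>bar z $ i) ` vert P))"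
  define ep where "ep = (\<chi> i. Max ((\<lambda>z. \<rho>a z $ i - \<rho>barb z $ i - \<rho>bar z $ i) ` vert P))"
  define R where "R = zono (diagm ((1/2) *\<^sub>R (ep - em))) ((1/2) *\<^sub>R (em + ep))"
  define Y where "Y = msum (msum {y - \<rho>h zbar + H *v zbar} ((\<lambda>v. - (Hv *v v)) ` V)) (uminus ` R)"
  define Xb where "Xb = gen_inter X Hx Y"
  have dA: "(\<rho>a has_derivative Da) (at zbar)"
    using a_diff zbar_in frechet_derivative_works unfolding Da_def by blast
  have dB: "(\<rho>b has_derivative Db) (at zbar)"
    using b_diff zbar_in frechet_derivative_works unfolding Db_def by blast
  have linA: "linear Da" using dA by (rule has_derivative_linear)
  have linB: "linear Db" using dB by (rule has_derivative_linear)
  have compA: "((\<lambda>z. \<rho>a z $ i) has_derivative (\<lambda>w. Da w $ i)) (at zbar)" for i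
    by (rule bounded_linear.has_derivative[OF bounded_linear_vec_nth dA])
  have compB: "((\<lambda>z. \<rho>b z $ i) has_derivative (\<lambda>w. Db w $ i)) (at zbar)" for i
    by (rule bounded_linear.has_derivative[OF bounded_linear_vec_nth dB])
  have linAi: "linear (\<lambda>w. Da w $ i)" for i using compA by (rule has_derivative_linear)
  have linBi: "linear (\<lambda>w. Db w $ i)" for i using compB by (rule has_derivative_linear)
  have linHi: "linear (\<lambda>w. (H *v w) $ i)" for i
    using linear_compose[OF matrix_vector_mul_linear[of H] bounded_linear.linear[OF bounded_linear_vec_nth[of i]]]
    by (simp add: comp_def)
  have cvP: "convex P" using P_poly by (rule polytope_imp_convex)
  have sub: "{x \<in> X. \<exists>v\<in>V. y = h x v} \<subseteq> Xb"
  proof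
    fix x assume "x \<in> {x \<in> X. \<exists>v\<in>V. y = h x v}"
    then obtain v where xX: "x \<in> X" and vV: "v \<in> V" and yv: "y = h x v" by blast
    define z where "z = stack x v"
    have zP: "z \<in> P" using Z_sub xX vV unfolding z_def by blast
    have hz: "\<rho>h z = \<rho>a z - \<rho>b z" using dc zP unfolding \<rho>h_def by blast
    have yz: "y = \<rho>h z" unfolding \<rho>h_def z_def using yv by simp
    define r where "r = y - \<rho>bar z"
    have bounds: "\<forall>i. em$i \<le> r$i \<and> r$i \<le> ep$i"
    proof
      fix i
      have ta: "\<rho>bara z $ i \<le> \<rho>a z $ i"
        using tangent_le[OF a_conv[rule_format, of i] zbar_in zP compA] unfolding \<rho>bara_def by simp
      have tb: "\<rho>barb z $ i \<le> \<rho>b z $ i"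
        using tangent_le[OF b_conv[rule_format, of i] zbar_in zP compB] unfolding \<rho>barb_def by simp
      define c1 where "c1 = \<rho>b zbar $ i - Db zbar $ i + \<rho>h zbar $ i - (H *v zbar) $ i"
      define c2 where "c2 = \<rho>a zbar $ i - Da zbar $ i - \<rho>h zbar $ i + (H *v zbar) $ i"
      have eq1: "(\<lambda>z. \<rho>a z $ i - \<rho>barb z $ i - \<rho>bar z $ i) = (\<lambda>z. \<rho>a z $ i - (c1 + (\<lambda>w. Db w $ i + (H *v w) $ i) z))"
        unfolding \<rho>barb_def \<rho>bar_def c1_def
        by (auto simp: fun_eq_iff linear_diff[OF linB] matrix_vector_mult_diff_distrib)
      have eq2: "(\<lambda>z. \<rho>bara z $ i - \<rho>b z $ i - \<rho>bar z $ i) = (\<lambda>z. (c2 + (\<lambda>w. Da w $ i - (H *v w) $ i) z) - \<rho>b z $ i)"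
        unfolding \<rho>bara_def \<rho>bar_def c2_def
        by (auto simp: fun_eq_iff linear_diff[OF linA] matrix_vector_mult_diff_distrib)
      have l1: "linear (\<lambda>w. Db w $ i + (H *v w) $ i)" using linBi linHi by (rule linear_compose_add)
      have l2: "linear (\<lambda>w. Da w $ i - (H *v w) $ i)" using linAi linHi by (rule linear_compose_sub)
      have cv1: "convex_on P (\<lambda>z. \<rho>a z $ i - \<rho>barb z $ i - \<rho>bar z $ i)"
        unfolding eq1 by (rule convex_on_diff[OF a_conv[rule_format] affine_conv(2)[OF l1 cvP]])
      have cv2: "concave_on P (\<lambda>z. \<rho>bara z $ i - \<rho>b z $ i - \<rho>bar z $ i)"
        unfolding eq2 by (rule concave_on_diff[OF affine_conv(2)[OF l2 cvP] b_conv[rule_format]])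
      have up: "\<rho>a z $ i - \<rho>barb z $ i - \<rho>bar z $ i \<le> ep $ i"
        using max_vert[OF P_poly cv1 zP] unfolding ep_def by simp
      have lo: "em $ i \<le> \<rho>bara z $ i - \<rho>b z $ i - \<rho>bar z $ i"
        using min_vert[OF P_poly cv2 zP] unfolding em_def by simp
      have "r $ i = \<rho>a z $ i - \<rho>b z $ i - \<rho>bar z $ i" unfolding r_def yz hz by simp
      then show "em$i \<le> r$i \<and> r$i \<le> ep$i" using up lo ta tb by linarith
    qed
    have rR: "r \<in> R" unfolding R_def by (rule box_in_zono[OF bounds])
    have "H *v z = Hx *v x + Hv *v v" using H_split[of H z] unfolding Hx_def Hv_def z_def by simp
    then have "Hx *v x = (y - \<rho>h zbar + H *v zbar) + (- (Hv *v v)) + (- r)"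
      unfolding r_def \<rho>bar_def by (simp add: matrix_vector_mult_diff_distrib algebra_simps)
    then have "Hx *v x \<in> Y" unfolding Y_def msum_def using rR vV by blast
    then show "x \<in> Xb" unfolding Xb_def gen_inter_def using xX by blast
  qed
  have cz: "is_CZ Xb"
    unfolding Xb_def Y_def R_def
    by (intro is_CZ_gen_inter X_CZ is_CZ_msum is_CZ_singleton is_CZ_linear_image[OF lin_neg V_CZ]
        is_CZ_linear_image[OF lin_uminus] is_CZ_zono)
  show ?thesis unfolding Let_def
    using sub cz unfolding Xb_def Y_def R_def em_def ep_def \<rho>bara_def \<rho>barb_def \<rho>bar_def Da_def Db_def
      Hx_def Hv_def H_def \<rho>h_def by simp
qed

end
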